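(* Let $(X,d)$ be a pseudometric space of diameter at most 1 and let $\phi:(X,d)\to(\bar X,\bar d)$ be its metric completion (so $\bar X$ is the set of equivalence classes of Cauchy sequences in $X$, with $(x_n)\sim(y_n)$ iff $\lim_n d(x_n,y_n)=0$, $\bar d((x_n),(y_n))=\lim_n d(x_n,y_n)$, and $\phi(x)$ the class of the constant sequence). Then $G(\phi)$ is an isomorphism in $\mathrm{ER}(\mathbf U)$, where $G:\mathbf{pMet}_1\to\mathrm{ER}(\mathbf U)$ is given by $G(X,d)=(X,d)$ and $G(f)=[(x,y)\mapsto d(f(x),y)]$.
   Context: $\mathbf{pMet}_1$: pseudometric spaces with all distances $\le 1$ and uniformly continuous maps. For functions $\alpha,\beta:Z\to[0,1]$ write $\alpha\sqsubseteq\beta$ if for every $\varepsilon>0$ there exists $\delta>0$ such that for all $z\in Z$, $\alpha(z)\le\delta$ implies $\beta(z)\le\varepsilon$. The category $\mathrm{ER}(\mathbf U)$: objects are pairs $(X,R)$ with $X$ a set and $R:X\times X\to[0,1]$ such that $R(x,x)=0$ for all $x$, $R(x,y)\sqsubseteq R(y,x)$ as functions of $(x,y)$, and $\max(R(x,y),R(y,z))\sqsubseteq R(x,z)$ as functions of $(x,y,z)$. A functional relation $(X,R)\to(Y,S)$ is a function $F:X\times Y\to[0,1]$ with $\max(F(x,y),R(x,x'),S(y,y'))\sqsubseteq F(x',y')$ as functions of $(x,x',y,y')$, $\max(F(x,y),F(x,y'))\sqsubseteq S(y,y')$ as functions of $(x,y,y')$, and $\inf_{y\in Y}F(x,y)=0$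 for all $x$. Morphisms are equivalence classes $[F]$ of functional relations, with $F\sim F'$ iff $F\sqsubseteq F'$ as functions on $X\times Y$; identity $[R]$; composite of $[F]$ and $[H]$ is $[(x,z)\mapsto\inf_y\max(F(x,y),H(y,z))]$. *)

theory Defs
  imports Complex_Main
begin

definition sqle :: "'z set \<Rightarrow> ('z \<Rightarrow> real) \<Rightarrow> ('z \<Rightarrow> real) \<Rightarrow> bool" where
  "sqle Z \<alpha> \<beta> \<longleftrightarrow> (\<forall>\<epsilon>>0. \<exists>\<delta>>0. \<forall>z\<in>Z. \<alpha> z \<le> \<delta> \<longrightarrow> \<beta> z \<le> \<epsilon>)"

definition er_obj :: "'a set \<Rightarrow> ('a \<Rightarrow> 'a \<Rightarrow> real) \<Rightarrow> bool" where
  "er_obj X R \<longleftrightarrow>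
     (\<forall>x\<in>X. \<forall>y\<in>X. 0 \<le> R x y \<and> R x y \<le> 1) \<and>
     (\<forall>x\<in>X. R x x = 0) \<and>
     sqle (X \<times> X) (\<lambda>(x,y). R x y) (\<lambda>(x,y). R y x) \<and>
     sqle (X \<times> X \<times> X) (\<lambda>(x,y,z). max (R x y) (R y z)) (\<lambda>(x,y,z). R x z)"

text \<open>Functional relation (X,R) -> (Y,S). Since F takes values in [0,1],
  inf_y F(x,y) = 0 is written out as: for every eps > 0 some y has F(x,y) < eps.\<close>
definition func_rel ::
  "'a set \<Rightarrow> ('a \<Rightarrow> 'a \<Rightarrow> real) \<Rightarrow> 'b set \<Rightarrow> ('b \<Rightarrow> 'b \<Rightarrow> real) \<Rightarrow> ('a \<Rightarrow> 'b \<Rightarrow> real) \<Rightarrow> bool" where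
  "func_rel X R Y S F \<longleftrightarrow>
     (\<forall>x\<in>X. \<forall>y\<in>Y. 0 \<le> F x y \<and> F x y \<le> 1) \<and>
     sqle (X \<times> X \<times> Y \<times> Y) (\<lambda>(x,x',y,y'). max (F x y) (max (R x x') (S y y')))
                           (\<lambda>(x,x',y,y'). F x' y') \<and>
     sqle (X \<times> Y \<times> Y) (\<lambda>(x,y,y'). max (F x y) (F x y')) (\<lambda>(x,y,y'). S y y') \<and>
     (\<forall>x\<in>X. \<forall>\<epsilon>>0. \<exists>y\<in>Y. F x y < \<epsilon>)"

text \<open>Equivalence of functional relations (equality of morphisms): F ~ F' iff F \<sqsubseteq> F'.\<close>
definition rel_equiv :: "'a set \<Rightarrow> 'b set \<Rightarrow> ('a \<Rightarrow> 'b \<Rightarrow> real) \<Rightarrow> ('a \<Rightarrow> 'b \<Rightarrow> real) \<Rightarrow> bool" where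
  "rel_equiv X Y F F' \<longleftrightarrow> sqle (X \<times> Y) (\<lambda>(x,y). F x y) (\<lambda>(x,y). F' x y)"

definition rel_comp :: "'b set \<Rightarrow> ('a \<Rightarrow> 'b \<Rightarrow> real) \<Rightarrow> ('b \<Rightarrow> 'c \<Rightarrow> real) \<Rightarrow> 'a \<Rightarrow> 'c \<Rightarrow> real" where
  "rel_comp Y F H = (\<lambda>x z. INF y\<in>Y. max (F x y) (H y z))"

definition er_iso ::
  "'a set \<Rightarrow> ('a \<Rightarrow> 'a \<Rightarrow> real) \<Rightarrow> 'b set \<Rightarrow> ('b \<Rightarrow> 'b \<Rightarrow> real) \<Rightarrow> ('a \<Rightarrow> 'b \<Rightarrow> real) \<Rightarrow> bool" where
  "er_iso X R Y S F \<longleftrightarrow> func_rel X R Y S F \<and>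
     (\<exists>H. func_rel Y S X R H \<and>
          rel_equiv X X (rel_comp Y F H) R \<and>
          rel_equiv Y Y (rel_comp X H F) S)"

definition pmet1 :: "'a set \<Rightarrow> ('a \<Rightarrow> 'a \<Rightarrow> real) \<Rightarrow> bool" where
  "pmet1 X d \<longleftrightarrow>
     (\<forall>x\<in>X. d x x = 0) \<and>
     (\<forall>x\<in>X. \<forall>y\<in>X. d x y = d y x \<and> 0 \<le> d x y \<and> d x y \<le> 1) \<and>
     (\<forall>x\<in>X. \<forall>y\<in>X. \<forall>z\<in>X. d x z \<le> d x y + d y z)"

definition cauchy_in :: "'a set \<Rightarrow> ('a \<Rightarrow> 'a \<Rightarrow> real) \<Rightarrow> (nat \<Rightarrow> 'a) \<Rightarrow> bool" where
  "cauchy_in X d s \<longleftrightarrow> (\<forall>n. s n \<in> X) \<and>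
     (\<forall>\<epsilon>>0. \<exists>N. \<forall>m\<ge>N. \<forall>n\<ge>N. d (s m) (s n) < \<epsilon>)"

definition seq_equiv :: "('a \<Rightarrow> 'a \<Rightarrow> real) \<Rightarrow> (nat \<Rightarrow> 'a) \<Rightarrow> (nat \<Rightarrow> 'a) \<Rightarrow> bool" where
  "seq_equiv d s t \<longleftrightarrow> (\<lambda>n. d (s n) (t n)) \<longlonglongrightarrow> 0"

definition seq_class :: "'a set \<Rightarrow> ('a \<Rightarrow> 'a \<Rightarrow> real) \<Rightarrow> (nat \<Rightarrow> 'a) \<Rightarrow> (nat \<Rightarrow> 'a) set" where
  "seq_class X d s = {t. cauchy_in X d t \<and> seq_equiv d s t}"

definition completion :: "'a set \<Rightarrow> ('a \<Rightarrow> 'a \<Rightarrow> real) \<Rightarrow> (nat \<Rightarrow> 'a) set set" where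
  "completion X d = {seq_class X d s | s. cauchy_in X d s}"

definition completion_dist :: "('a \<Rightarrow> 'a \<Rightarrow> real) \<Rightarrow> (nat \<Rightarrow> 'a) set \<Rightarrow> (nat \<Rightarrow> 'a) set \<Rightarrow> real" where
  "completion_dist d A B = lim (\<lambda>n. d ((SOME s. s \<in> A) n) ((SOME t. t \<in> B) n))"

definition completion_emb :: "'a set \<Rightarrow> ('a \<Rightarrow> 'a \<Rightarrow> real) \<Rightarrow> 'a \<Rightarrow> (nat \<Rightarrow> 'a) set" where
  "completion_emb X d x = seq_class X d (\<lambda>_. x)"

definition G_map :: "('b \<Rightarrow> 'b \<Rightarrow> real) \<Rightarrow> ('a \<Rightarrow> 'b) \<Rightarrow> 'a \<Rightarrow> 'b \<Rightarrow> real" where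
  "G_map e f = (\<lambda>x y. e (f x) y)"

end

theory Submission
  imports Defs
begin

lemma iso_abs:
  fixes X :: "'a set" and Y :: "'b set"
  assumes pX: "pmet1 X d"
  and fY: "\<forall>x\<in>X. f x \<in> Y"
  and iso: "\<forall>x\<in>X. \<forall>x'\<in>X. e (f x) (f x') = d x x'"
  and esym: "\<forall>y\<in>Y. \<forall>y'\<in>Y. e y y' = e y' y"
  and ebd: "\<forall>y\<in>Y. \<forall>y'\<in>Y. 0 \<le> e y y' \<and> e y y' \<le> 1"
  and etri: "\<forall>y1\<in>Y. \<forall>y2\<in>Y. \<forall>y3\<in>Y. e y1 y3 \<le> e y1 y2 + e y2 y3"
  and dense: "\<forall>y\<in>Y. \<forall>\<epsilon>>0. \<exists>x\<in>X. e (f x) y < \<epsilon>"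
  shows "er_iso X d Y e (\<lambda>x y. e (f x) y)"
proof -
  from pX have d0: "\<forall>x\<in>X. d x x = 0" and dsym: "\<forall>x\<in>X. \<forall>y\<in>X. d x y = d y x"
    and dbd: "\<forall>x\<in>X. \<forall>y\<in>X. 0 \<le> d x y \<and> d x y \<le> 1"
    unfolding pmet1_def by auto
  have F: "func_rel X d Y e (\<lambda>x y. e (f x) y)"
    unfolding func_rel_def
  proof (intro conjI)
    show "\<forall>x\<in>X. \<forall>y\<in>Y. 0 \<le> e (f x) y \<and> e (f x) y \<le> 1" using fY ebd by auto
    show "sqle (X \<times> X \<times> Y \<times> Y) (\<lambda>(x,x',y,y'). max (e (f x) y) (max (d x x') (e y y')))
                           (\<lambda>(x,x',y,y'). e (f x') y')"
      unfolding sqle_def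
    proof (intro allI impI)
      fix \<epsilon> :: real assume "\<epsilon> > 0"
      show "\<exists>\<delta>>0. \<forall>z\<in>X \<times> X \<times> Y \<times> Y. (case z of (x,x',y,y') \<Rightarrow> max (e (f x) y) (max (d x x') (e y y'))) \<le> \<delta> \<longrightarrow> (case z of (x,x',y,y') \<Rightarrow> e (f x') y') \<le> \<epsilon>"
      proof (intro exI[of _ "\<epsilon>/3"] conjI ballI impI)
        show "\<epsilon>/3 > 0" using \<open>\<epsilon>>0\<close> by simp
        fix z assume z: "z \<in> X \<times> X \<times> Y \<times> Y" and le: "(case z of (x,x',y,y') \<Rightarrow> max (e (f x) y) (max (d x x') (e y y'))) \<le> \<epsilon>/3"
        obtain x x' y y' where zz: "z = (x,x',y,y')" by (cases z) auto
        have m: "x \<in> X" "x' \<in> X" "y \<in> Y" "y' \<in> Y" using z zz by auto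
        have a: "e (f x) y \<le> \<epsilon>/3" "d x x' \<le> \<epsilon>/3" "e y y' \<le> \<epsilon>/3" using le zz by auto
        have "e (f x') y' \<le> e (f x') (f x) + e (f x) y + e y y'"
        proof -
          have "e (f x') y' \<le> e (f x') (f x) + e (f x) y'" using etri m fY by blast
          moreover have "e (f x) y' \<le> e (f x) y + e y y'" using etri m fY by blast
          ultimately show ?thesis by linarith
        qed
        moreover have "e (f x') (f x) = d x x'" using iso dsym m by auto
        ultimately show "(case z of (x,x',y,y') \<Rightarrow> e (f x') y') \<le> \<epsilon>" using a zz by simp
      qed
    qed
    show "sqle (X \<times> Y \<times> Y) (\<lambda>(x,y,y'). max (e (f x) y) (e (f x) y')) (\<lambda>(x,y,y'). e y y')"
      unfolding sqle_def
    proof (intro allI impI)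
      fix \<epsilon> :: real assume "\<epsilon> > 0"
      show "\<exists>\<delta>>0. \<forall>z\<in>X \<times> Y \<times> Y. (case z of (x,y,y') \<Rightarrow> max (e (f x) y) (e (f x) y')) \<le> \<delta> \<longrightarrow> (case z of (x,y,y') \<Rightarrow> e y y') \<le> \<epsilon>"
      proof (intro exI[of _ "\<epsilon>/2"] conjI ballI impI)
        show "\<epsilon>/2 > 0" using \<open>\<epsilon>>0\<close> by simp
        fix z assume z: "z \<in> X \<times> Y \<times> Y" and le: "(case z of (x,y,y') \<Rightarrow> max (e (f x) y) (e (f x) y')) \<le> \<epsilon>/2"
        obtain x y y' where zz: "z = (x,y,y')" by (cases z) auto
        have m: "x \<in> X" "y \<in> Y" "y' \<in> Y" using z zz by auto
        have a: "e (f x) y \<le> \<epsilon>/2" "e (f x) y' \<le> \<epsilon>/2" using le zz by auto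
        have "e y y' \<le> e y (f x) + e (f x) y'" using etri m fY by auto
        moreover have "e y (f x) = e (f x) y" using esym m fY by auto
        ultimately show "(case z of (x,y,y') \<Rightarrow> e y y') \<le> \<epsilon>" using a zz by simp
      qed
    qed
    show "\<forall>x\<in>X. \<forall>\<epsilon>>0. \<exists>y\<in>Y. e (f x) y < \<epsilon>"
      using fY iso d0 by force
  qed
  have H: "func_rel Y e X d (\<lambda>y x. e y (f x))"
    unfolding func_rel_def
  proof (intro conjI)
    show "\<forall>y\<in>Y. \<forall>x\<in>X. 0 \<le> e y (f x) \<and> e y (f x) \<le> 1" using fY ebd by auto
    show "sqle (Y \<times> Y \<times> X \<times> X) (\<lambda>(y,y',x,x'). max (e y (f x)) (max (e y y') (d x x')))
                           (\<lambda>(y,y',x,x'). e y' (f x'))"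
      unfolding sqle_def
    proof (intro allI impI)
      fix \<epsilon> :: real assume "\<epsilon> > 0"
      show "\<exists>\<delta>>0. \<forall>z\<in>Y \<times> Y \<times> X \<times> X. (case z of (y,y',x,x') \<Rightarrow> max (e y (f x)) (max (e y y') (d x x'))) \<le> \<delta> \<longrightarrow> (case z of (y,y',x,x') \<Rightarrow> e y' (f x')) \<le> \<epsilon>"
      proof (intro exI[of _ "\<epsilon>/3"] conjI ballI impI)
        show "\<epsilon>/3 > 0" using \<open>\<epsilon>>0\<close> by simp
        fix z assume z: "z \<in> Y \<times> Y \<times> X \<times> X" and le: "(case z of (y,y',x,x') \<Rightarrow> max (e y (f x)) (max (e y y') (d x x'))) \<le> \<epsilon>/3"
        obtain x x' y y' where zz: "z = (y,y',x,x')" by (cases z) auto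
        have m: "x \<in> X" "x' \<in> X" "y \<in> Y" "y' \<in> Y" using z zz by auto
        have a: "e y (f x) \<le> \<epsilon>/3" "d x x' \<le> \<epsilon>/3" "e y y' \<le> \<epsilon>/3" using le zz by auto
        have "e y' (f x') \<le> e y' y + e y (f x) + e (f x) (f x')"
        proof -
          have "e y' (f x') \<le> e y' y + e y (f x')" using etri m fY by blast
          moreover have "e y (f x') \<le> e y (f x) + e (f x) (f x')" using etri m fY by blast
          ultimately show ?thesis by linarith
        qed
        moreover have "e (f x) (f x') = d x x'" using iso m by auto
        moreover have "e y' y = e y y'" using esym m by auto
        ultimately show "(case z of (y,y',x,x') \<Rightarrow> e y' (f x')) \<le> \<epsilon>" using a zz by simp
      qed
    qed
    show "sqle (Y \<times> X \<times> X) (\<lambda>(y,x,x'). max (e y (f x)) (e y (f x'))) (\<lambda>(y,x,x'). d x x')"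
      unfolding sqle_def
    proof (intro allI impI)
      fix \<epsilon> :: real assume "\<epsilon> > 0"
      show "\<exists>\<delta>>0. \<forall>z\<in>Y \<times> X \<times> X. (case z of (y,x,x') \<Rightarrow> max (e y (f x)) (e y (f x'))) \<le> \<delta> \<longrightarrow> (case z of (y,x,x') \<Rightarrow> d x x') \<le> \<epsilon>"
      proof (intro exI[of _ "\<epsilon>/2"] conjI ballI impI)
        show "\<epsilon>/2 > 0" using \<open>\<epsilon>>0\<close> by simp
        fix z assume z: "z \<in> Y \<times> X \<times> X" and le: "(case z of (y,x,x') \<Rightarrow> max (e y (f x)) (e y (f x'))) \<le> \<epsilon>/2"
        obtain x x' y where zz: "z = (y,x,x')" by (cases z) auto
        have m: "x \<in> X" "x' \<in> X" "y \<in> Y" using z zz by auto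
        have a: "e y (f x) \<le> \<epsilon>/2" "e y (f x') \<le> \<epsilon>/2" using le zz by auto
        have "e (f x) (f x') \<le> e (f x) y + e y (f x')" using etri m fY by auto
        moreover have "e y (f x) = e (f x) y" using esym m fY by auto
        moreover have "e (f x) (f x') = d x x'" using iso m by auto
        ultimately show "(case z of (y,x,x') \<Rightarrow> d x x') \<le> \<epsilon>" using a zz by simp
      qed
    qed
    show "\<forall>y\<in>Y. \<forall>\<epsilon>>0. \<exists>x\<in>X. e y (f x) < \<epsilon>"
    proof (intro ballI allI impI)
      fix y and \<epsilon> :: real assume "y \<in> Y" "\<epsilon> > 0"
      then obtain x where "x \<in> X" "e (f x) y < \<epsilon>" using dense by blast
      moreover have "e y (f x) = e (f x) y" using esym fY \<open>y \<in> Y\<close> \<open>x \<in> X\<close> by blast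
      ultimately have "e y (f x) < \<epsilon>" by simp
      with \<open>x \<in> X\<close> show "\<exists>x\<in>X. e y (f x) < \<epsilon>" by blast
    qed
  qed
  have C1: "rel_equiv X X (rel_comp Y (\<lambda>x y. e (f x) y) (\<lambda>y x. e y (f x))) d"
    unfolding rel_equiv_def sqle_def rel_comp_def
  proof (intro allI impI)
    fix \<epsilon> :: real assume "\<epsilon> > 0"
    show "\<exists>\<delta>>0. \<forall>z\<in>X \<times> X. (case z of (x,x') \<Rightarrow> (INF y\<in>Y. max (e (f x) y) (e y (f x')))) \<le> \<delta> \<longrightarrow> (case z of (x,x') \<Rightarrow> d x x') \<le> \<epsilon>"
    proof (intro exI[of _ "\<epsilon>/4"] conjI ballI impI)
      show "\<epsilon>/4 > 0" using \<open>\<epsilon>>0\<close> by simp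
      fix z assume z: "z \<in> X \<times> X" and le: "(case z of (x,x') \<Rightarrow> (INF y\<in>Y. max (e (f x) y) (e y (f x')))) \<le> \<epsilon>/4"
      obtain x x' where zz: "z = (x,x')" by (cases z) auto
      have m: "x \<in> X" "x' \<in> X" using z zz by auto
      have ne: "Y \<noteq> {}" using fY m by auto
      have bdd: "bdd_below ((\<lambda>y. max (e (f x) y) (e y (f x'))) ` Y)"
        by (rule bdd_belowI[of _ 0]) (use ebd fY m in force)
      have "(INF y\<in>Y. max (e (f x) y) (e y (f x'))) < \<epsilon>/2" using le zz \<open>\<epsilon>>0\<close> by simp
      then obtain y where y: "y \<in> Y" "max (e (f x) y) (e y (f x')) < \<epsilon>/2"
        using cINF_less_iff[OF ne bdd] by blast
      have "e (f x) (f x') \<le> e (f x) y + e y (f x')" using etri m fY y by auto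
      moreover have "e (f x) (f x') = d x x'" using iso m by auto
      ultimately show "(case z of (x,x') \<Rightarrow> d x x') \<le> \<epsilon>" using y zz by simp
    qed
  qed
  have C2: "rel_equiv Y Y (rel_comp X (\<lambda>y x. e y (f x)) (\<lambda>x y. e (f x) y)) e"
    unfolding rel_equiv_def sqle_def rel_comp_def
  proof (intro allI impI)
    fix \<epsilon> :: real assume "\<epsilon> > 0"
    show "\<exists>\<delta>>0. \<forall>z\<in>Y \<times> Y. (case z of (y,y') \<Rightarrow> (INF x\<in>X. max (e y (f x)) (e (f x) y'))) \<le> \<delta> \<longrightarrow> (case z of (y,y') \<Rightarrow> e y y') \<le> \<epsilon>"
    proof (intro exI[of _ "\<epsilon>/4"] conjI ballI impI)
      show "\<epsilon>/4 > 0" using \<open>\<epsilon>>0\<close> by simp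
      fix z assume z: "z \<in> Y \<times> Y" and le: "(case z of (y,y') \<Rightarrow> (INF x\<in>X. max (e y (f x)) (e (f x) y'))) \<le> \<epsilon>/4"
      obtain y y' where zz: "z = (y,y')" by (cases z) auto
      have m: "y \<in> Y" "y' \<in> Y" using z zz by auto
      have "\<exists>x\<in>X. e (f x) y < 1" using dense m by simp
      then have ne: "X \<noteq> {}" by blast
      have bdd: "bdd_below ((\<lambda>x. max (e y (f x)) (e (f x) y')) ` X)"
        by (rule bdd_belowI[of _ 0]) (use ebd fY m in force)
      have "(INF x\<in>X. max (e y (f x)) (e (f x) y')) < \<epsilon>/2" using le zz \<open>\<epsilon>>0\<close> by simp
      then obtain x where x: "x \<in> X" "max (e y (f x)) (e (f x) y') < \<epsilon>/2"
        using cINF_less_iff[OF ne bdd] by blast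
      have "e y y' \<le> e y (f x) + e (f x) y'" using etri m fY x by auto
      then show "(case z of (y,y') \<Rightarrow> e y y') \<le> \<epsilon>" using x zz by simp
    qed
  qed
  show ?thesis unfolding er_iso_def using F H C1 C2 by blast
qed

lemma pm: assumes "pmet1 X d"
  shows "\<And>x. x\<in>X \<Longrightarrow> d x x = 0" "\<And>x y. x\<in>X \<Longrightarrow> y\<in>X \<Longrightarrow> d x y = d y x"
    "\<And>x y. x\<in>X \<Longrightarrow> y\<in>X \<Longrightarrow> 0 \<le> d x y" "\<And>x y. x\<in>X \<Longrightarrow> y\<in>X \<Longrightarrow> d x y \<le> 1"
    "\<And>x y z. x\<in>X \<Longrightarrow> y\<in>X \<Longrightarrow> z\<in>X \<Longrightarrow> d x z \<le> d x y + d y z"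
  using assms unfolding pmet1_def by auto

lemma in_class_self: assumes "pmet1 X d" "cauchy_in X d s" shows "s \<in> seq_class X d s"
proof -
  have "\<forall>n. s n \<in> X" using assms(2) cauchy_in_def by blast
  then have "(\<lambda>n. d (s n) (s n)) = (\<lambda>n. 0)" using pm(1)[OF assms(1)] by auto
  then show ?thesis using assms(2) unfolding seq_class_def seq_equiv_def by simp
qed

lemma equiv_cross: assumes p: "pmet1 X d" and s: "\<forall>n. s n \<in> X"
  and a: "a \<in> seq_class X d s" and b: "b \<in> seq_class X d s"
  shows "(\<lambda>n. d (a n) (b n)) \<longlonglongrightarrow> 0"
proof -
  have aX: "\<forall>n. a n \<in> X" and bX: "\<forall>n. b n \<in> X" using a b unfolding seq_class_def cauchy_in_def by auto
  have la: "(\<lambda>n. d (s n) (a n)) \<longlonglongrightarrow> 0" and lb: "(\<lambda>n. d (s n) (b n)) \<longlonglongrightarrow> 0"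
    using a b unfolding seq_class_def seq_equiv_def by auto
  have lim: "(\<lambda>n. d (s n) (a n) + d (s n) (b n)) \<longlonglongrightarrow> 0 + 0" by (rule tendsto_add[OF la lb])
  have lo: "\<forall>n. 0 \<le> d (a n) (b n)" using pm(3)[OF p] aX bX by blast
  have hi: "\<forall>n. d (a n) (b n) \<le> d (s n) (a n) + d (s n) (b n)"
  proof
    fix n
    have "d (a n) (b n) \<le> d (a n) (s n) + d (s n) (b n)" using pm(5)[OF p] aX bX s by blast
    moreover have "d (a n) (s n) = d (s n) (a n)" using pm(2)[OF p] aX s by blast
    ultimately show "d (a n) (b n) \<le> d (s n) (a n) + d (s n) (b n)" by simp
  qed
  show ?thesis
  proof (rule tendsto_sandwich[of "\<lambda>n. 0" _ _ "\<lambda>n. d (s n) (a n) + d (s n) (b n)"])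
    show "\<forall>\<^sub>F n in sequentially. 0 \<le> d (a n) (b n)" by (rule always_eventually) (use lo in blast)
    show "\<forall>\<^sub>F n in sequentially. d (a n) (b n) \<le> d (s n) (a n) + d (s n) (b n)"
      by (rule always_eventually) (use hi in blast)
    show "(\<lambda>n. 0::real) \<longlonglongrightarrow> 0" by (rule tendsto_const)
    show "(\<lambda>n. d (s n) (a n) + d (s n) (b n)) \<longlonglongrightarrow> 0" using lim by simp
  qed
qed

lemma dist_conv: assumes p: "pmet1 X d" and a: "cauchy_in X d a" and b: "cauchy_in X d b"
  shows "convergent (\<lambda>n. d (a n) (b n))"
proof -
  have aX: "\<forall>n. a n \<in> X" and bX: "\<forall>n. b n \<in> X" using a b unfolding cauchy_in_def by auto
  have "Cauchy (\<lambda>n. d (a n) (b n))"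
  proof (rule metric_CauchyI)
    fix \<epsilon> :: real assume "0 < \<epsilon>"
    then have "\<epsilon>/2 > 0" by simp
    obtain N1 where N1: "\<forall>m\<ge>N1. \<forall>n\<ge>N1. d (a m) (a n) < \<epsilon>/2"
      using a \<open>\<epsilon>/2 > 0\<close> unfolding cauchy_in_def by blast
    obtain N2 where N2: "\<forall>m\<ge>N2. \<forall>n\<ge>N2. d (b m) (b n) < \<epsilon>/2"
      using b \<open>\<epsilon>/2 > 0\<close> unfolding cauchy_in_def by blast
    show "\<exists>M. \<forall>m\<ge>M. \<forall>n\<ge>M. dist (d (a m) (b m)) (d (a n) (b n)) < \<epsilon>"
    proof (intro exI[of _ "max N1 N2"] allI impI)
      fix m n assume "m \<ge> max N1 N2" "n \<ge> max N1 N2"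
      then have h: "d (a m) (a n) < \<epsilon>/2" "d (b m) (b n) < \<epsilon>/2" using N1 N2 by auto
      have t1: "d (a m) (b m) \<le> d (a m) (a n) + d (a n) (b n) + d (b n) (b m)"
        using pm(5)[OF p, of "a m" "a n" "b m"] pm(5)[OF p, of "a n" "b n" "b m"] aX bX by auto
      have t2: "d (a n) (b n) \<le> d (a n) (a m) + d (a m) (b m) + d (b m) (b n)"
        using pm(5)[OF p, of "a n" "a m" "b n"] pm(5)[OF p, of "a m" "b m" "b n"] aX bX by auto
      have s: "d (a n) (a m) = d (a m) (a n)" "d (b n) (b m) = d (b m) (b n)"
        using pm(2)[OF p] aX bX by auto
      show "dist (d (a m) (b m)) (d (a n) (b n)) < \<epsilon>"
        unfolding dist_real_def using t1 t2 s h by linarith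
    qed
  qed
  then show ?thesis using Cauchy_convergent_iff by blast
qed

lemma core: assumes p: "pmet1 X d" and s: "cauchy_in X d s" and t: "cauchy_in X d t"
  and a: "a \<in> seq_class X d s" and b: "b \<in> seq_class X d t"
  shows "(\<lambda>n. d (a n) (b n)) \<longlonglongrightarrow> completion_dist d (seq_class X d s) (seq_class X d t)"
proof -
  define a0 where "a0 = (SOME s'. s' \<in> seq_class X d s)"
  define b0 where "b0 = (SOME s'. s' \<in> seq_class X d t)"
  have a0: "a0 \<in> seq_class X d s" unfolding a0_def using someI[of "\<lambda>s'. s' \<in> seq_class X d s", OF in_class_self[OF p s]] by simp
  have b0: "b0 \<in> seq_class X d t" unfolding b0_def using someI[of "\<lambda>s'. s' \<in> seq_class X d t", OF in_class_self[OF p t]] by simp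
  have sX: "\<forall>n. s n \<in> X" and tX: "\<forall>n. t n \<in> X" using s t cauchy_in_def by auto
  have ca: "cauchy_in X d a" "cauchy_in X d a0" "cauchy_in X d b" "cauchy_in X d b0"
    using a a0 b b0 seq_class_def by auto
  have aX: "\<forall>n. a n \<in> X" "\<forall>n. a0 n \<in> X" "\<forall>n. b n \<in> X" "\<forall>n. b0 n \<in> X"
    using ca cauchy_in_def by auto
  have L: "(\<lambda>n. d (a0 n) (b0 n)) \<longlonglongrightarrow> completion_dist d (seq_class X d s) (seq_class X d t)"
    unfolding completion_dist_def a0_def[symmetric] b0_def[symmetric]
    using dist_conv[OF p ca(2) ca(4)] unfolding convergent_LIMSEQ_iff .
  have h1: "(\<lambda>n. d (a n) (a0 n)) \<longlonglongrightarrow> 0" by (rule equiv_cross[OF p sX a a0])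
  have h2: "(\<lambda>n. d (b n) (b0 n)) \<longlonglongrightarrow> 0" by (rule equiv_cross[OF p tX b b0])
  have hh: "(\<lambda>n. d (a n) (a0 n) + d (b n) (b0 n)) \<longlonglongrightarrow> 0" using tendsto_add[OF h1 h2] by simp
  have hm: "(\<lambda>n. - (d (a n) (a0 n) + d (b n) (b0 n))) \<longlonglongrightarrow> 0" using tendsto_minus[OF hh] by simp
  have bnd: "\<bar>d (a n) (b n) - d (a0 n) (b0 n)\<bar> \<le> d (a n) (a0 n) + d (b n) (b0 n)" for n
  proof -
    have t1: "d (a n) (b n) \<le> d (a n) (a0 n) + d (a0 n) (b0 n) + d (b0 n) (b n)"
      using pm(5)[OF p, of "a n" "a0 n" "b n"] pm(5)[OF p, of "a0 n" "b0 n" "b n"] aX by auto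
    have t2: "d (a0 n) (b0 n) \<le> d (a0 n) (a n) + d (a n) (b n) + d (b n) (b0 n)"
      using pm(5)[OF p, of "a0 n" "a n" "b0 n"] pm(5)[OF p, of "a n" "b n" "b0 n"] aX by auto
    have s: "d (a0 n) (a n) = d (a n) (a0 n)" "d (b0 n) (b n) = d (b n) (b0 n)"
      using pm(2)[OF p] aX by auto
    show ?thesis using t1 t2 s by linarith
  qed
  have "(\<lambda>n. d (a n) (b n) - d (a0 n) (b0 n)) \<longlonglongrightarrow> 0"
  proof (rule tendsto_sandwich[OF _ _ hm hh])
    have lo: "- (d (a n) (a0 n) + d (b n) (b0 n)) \<le> d (a n) (b n) - d (a0 n) (b0 n)" for n
    proof -
      have "- (d (a n) (b n) - d (a0 n) (b0 n)) \<le> d (a n) (a0 n) + d (b n) (b0 n)"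
        by (rule abs_le_D2[OF bnd])
      then show ?thesis by linarith
    qed
    have hi: "d (a n) (b n) - d (a0 n) (b0 n) \<le> d (a n) (a0 n) + d (b n) (b0 n)" for n
      by (rule abs_le_D1[OF bnd])
    show "\<forall>\<^sub>F n in sequentially. - (d (a n) (a0 n) + d (b n) (b0 n)) \<le> d (a n) (b n) - d (a0 n) (b0 n)"
      by (rule always_eventually) (use lo in blast)
    show "\<forall>\<^sub>F n in sequentially. d (a n) (b n) - d (a0 n) (b0 n) \<le> d (a n) (a0 n) + d (b n) (b0 n)"
      by (rule always_eventually) (use hi in blast)
  qed
  from tendsto_add[OF this L]
  have "(\<lambda>n. d (a n) (b n) - d (a0 n) (b0 n) + d (a0 n) (b0 n)) \<longlonglongrightarrow> 0 + completion_dist d (seq_class X d s) (seq_class X d t)" .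
  then show ?thesis by (simp only: diff_add_cancel add_0_left)
qed

theorem mainTheorem10:
  fixes X :: "'a set" and d :: "'a \<Rightarrow> 'a \<Rightarrow> real"
  assumes "pmet1 X d"
  shows "er_iso X d (completion X d) (completion_dist d)
           (G_map (completion_dist d) (completion_emb X d))"
proof -
  note p = assms
  let ?Y = "completion X d" and ?e = "completion_dist d" and ?f = "completion_emb X d"
  have constC: "cauchy_in X d (\<lambda>_. x)" if "x \<in> X" for x
    using that pm(1)[OF p] unfolding cauchy_in_def by auto
  have fY: "\<forall>x\<in>X. ?f x \<in> ?Y"
  proof
    fix x assume "x \<in> X"
    show "?f x \<in> ?Y" unfolding completion_emb_def completion_def
      by (rule CollectI, rule exI[of _ "\<lambda>_. x"]) (simp add: constC[OF \<open>x \<in> X\<close>])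
  qed
  have iso: "\<forall>x\<in>X. \<forall>x'\<in>X. ?e (?f x) (?f x') = d x x'"
  proof (intro ballI)
    fix x x' assume "x \<in> X" "x' \<in> X"
    have "(\<lambda>n. d x x') \<longlonglongrightarrow> ?e (?f x) (?f x')"
      unfolding completion_emb_def
      using core[OF p constC[OF \<open>x\<in>X\<close>] constC[OF \<open>x'\<in>X\<close>]
          in_class_self[OF p constC[OF \<open>x\<in>X\<close>]] in_class_self[OF p constC[OF \<open>x'\<in>X\<close>]]] .
    then show "?e (?f x) (?f x') = d x x'" using LIMSEQ_unique tendsto_const by blast
  qed
  have repr: "\<exists>s. cauchy_in X d s \<and> A = seq_class X d s" if "A \<in> ?Y" for A
    using that unfolding completion_def by blast
  have esym: "\<forall>y\<in>?Y. \<forall>y'\<in>?Y. ?e y y' = ?e y' y"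
  proof (intro ballI)
    fix A B assume "A \<in> ?Y" "B \<in> ?Y"
    then obtain s t where s: "cauchy_in X d s" "A = seq_class X d s" and t: "cauchy_in X d t" "B = seq_class X d t"
      using repr by blast
    have sX: "\<forall>n. s n \<in> X" "\<forall>n. t n \<in> X" using s t cauchy_in_def by auto
    have 1: "(\<lambda>n. d (s n) (t n)) \<longlonglongrightarrow> ?e A B"
      using core[OF p s(1) t(1) in_class_self[OF p s(1)] in_class_self[OF p t(1)]] s t by simp
    have 2: "(\<lambda>n. d (t n) (s n)) \<longlonglongrightarrow> ?e B A"
      using core[OF p t(1) s(1) in_class_self[OF p t(1)] in_class_self[OF p s(1)]] s t by simp
    have "(\<lambda>n. d (t n) (s n)) = (\<lambda>n. d (s n) (t n))" using pm(2)[OF p] sX by auto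
    with 2 have "(\<lambda>n. d (s n) (t n)) \<longlonglongrightarrow> ?e B A" by simp
    then show "?e A B = ?e B A" using 1 LIMSEQ_unique by blast
  qed
  have ebd: "\<forall>y\<in>?Y. \<forall>y'\<in>?Y. 0 \<le> ?e y y' \<and> ?e y y' \<le> 1"
  proof (intro ballI)
    fix A B assume "A \<in> ?Y" "B \<in> ?Y"
    then obtain s t where s: "cauchy_in X d s" "A = seq_class X d s" and t: "cauchy_in X d t" "B = seq_class X d t"
      using repr by blast
    have sX: "\<forall>n. s n \<in> X" "\<forall>n. t n \<in> X" using s t cauchy_in_def by auto
    have 1: "(\<lambda>n. d (s n) (t n)) \<longlonglongrightarrow> ?e A B"
      using core[OF p s(1) t(1) in_class_self[OF p s(1)] in_class_self[OF p t(1)]] s t by simp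
    show "0 \<le> ?e A B \<and> ?e A B \<le> 1"
    proof
      show "0 \<le> ?e A B" by (rule LIMSEQ_le_const[OF 1]) (use pm(3)[OF p] sX in blast)
      show "?e A B \<le> 1" by (rule LIMSEQ_le_const2[OF 1]) (use pm(4)[OF p] sX in blast)
    qed
  qed
  have etri: "\<forall>y1\<in>?Y. \<forall>y2\<in>?Y. \<forall>y3\<in>?Y. ?e y1 y3 \<le> ?e y1 y2 + ?e y2 y3"
  proof (intro ballI)
    fix A B C assume "A \<in> ?Y" "B \<in> ?Y" "C \<in> ?Y"
    then obtain s t u where s: "cauchy_in X d s" "A = seq_class X d s" and t: "cauchy_in X d t" "B = seq_class X d t"
      and u: "cauchy_in X d u" "C = seq_class X d u"
      using repr[of A] repr[of B] repr[of C] by blast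
    have sX: "\<forall>n. s n \<in> X" "\<forall>n. t n \<in> X" "\<forall>n. u n \<in> X" using s t u cauchy_in_def by auto
    have 1: "(\<lambda>n. d (s n) (t n)) \<longlonglongrightarrow> ?e A B"
      using core[OF p s(1) t(1) in_class_self[OF p s(1)] in_class_self[OF p t(1)]] s t by simp
    have 2: "(\<lambda>n. d (t n) (u n)) \<longlonglongrightarrow> ?e B C"
      using core[OF p t(1) u(1) in_class_self[OF p t(1)] in_class_self[OF p u(1)]] u t by simp
    have 3: "(\<lambda>n. d (s n) (u n)) \<longlonglongrightarrow> ?e A C"
      using core[OF p s(1) u(1) in_class_self[OF p s(1)] in_class_self[OF p u(1)]] s u by simp
    show "?e A C \<le> ?e A B + ?e B C"
    proof (rule LIMSEQ_le[OF 3 tendsto_add[OF 1 2]])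
      show "\<exists>N. \<forall>n\<ge>N. d (s n) (u n) \<le> d (s n) (t n) + d (t n) (u n)" using pm(5)[OF p] sX by blast
    qed
  qed
  have dense: "\<forall>y\<in>?Y. \<forall>\<epsilon>>0. \<exists>x\<in>X. ?e (?f x) y < \<epsilon>"
  proof (intro ballI allI impI)
    fix B and \<epsilon> :: real assume "B \<in> ?Y" "\<epsilon> > 0"
    then obtain t where t: "cauchy_in X d t" "B = seq_class X d t" using repr by blast
    have tX: "\<forall>n. t n \<in> X" using t cauchy_in_def by auto
    have "\<epsilon>/2 > 0" using \<open>\<epsilon>>0\<close> by simp
    then obtain N where N: "\<forall>m\<ge>N. \<forall>n\<ge>N. d (t m) (t n) < \<epsilon>/2"
      using t(1) unfolding cauchy_in_def by blast
    have 1: "(\<lambda>n. d (t N) (t n)) \<longlonglongrightarrow> ?e (?f (t N)) B"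
      unfolding completion_emb_def
      using core[OF p constC[OF tX[rule_format]] t(1) in_class_self[OF p constC[OF tX[rule_format]]] in_class_self[OF p t(1)]] t by simp
    have "?e (?f (t N)) B \<le> \<epsilon>/2"
    proof (rule LIMSEQ_le_const2[OF 1])
      show "\<exists>N'. \<forall>n\<ge>N'. d (t N) (t n) \<le> \<epsilon>/2" using N by (intro exI[of _ N]) (auto intro: less_imp_le)
    qed
    then show "\<exists>x\<in>X. ?e (?f x) B < \<epsilon>" using tX \<open>\<epsilon>>0\<close> by (intro bexI[of _ "t N"]) auto
  qed
  show ?thesis unfolding G_map_def
    by (rule iso_abs[where f="completion_emb X d" and e="completion_dist d" and Y="completion X d", OF p fY iso esym ebd etri dense])
qed

end
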